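(* Let $\rho,T>0$ and $\theta>0$, and for each $N\ge2$ let $\bm v,\bm w$ be as in the context. Then, as $N\uparrow\infty$, $$\theta\,\bm v^\top\bm v\to\frac{9(1+2e^{3\rho T})^2}{4\big(1-2e^{3\rho T}(5+3\rho T)\big)^2},\qquad \theta\,\bm w^\top\bm w\to\frac{1}{4(\rho T+1)^2}.$$
   Context: For $N\ge2$ let $\tilde\Gamma$ be the $(N+1)\times(N+1)$ lower triangular matrix with $\tilde\Gamma_{ij}=0$ for $i<j$, $\tilde\Gamma_{ii}=1/2$, $\tilde\Gamma_{ij}=e^{-\rho(i-j)T/N}$ for $i>j$; $\Gamma:=\tilde\Gamma+\tilde\Gamma^\top$; $\bm\nu:=(\Gamma+\tilde\Gamma+2\theta\mathrm{Id})^{-1}\mathbf1$, $\bm\omega:=(\Gamma-\tilde\Gamma+2\theta\mathrm{Id})^{-1}\mathbf1$ ($\mathbf1$ the all-ones vector), $\bm v:=\bm\nu/(\mathbf1^\top\bm\nu)$ and $\bm w:=\bm\omega/(\mathbf1^\top\bm\omega)$; all depend on $N$. *)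

theory Defs
  imports Complex_Main "Jordan_Normal_Form.Gauss_Jordan_Elimination"
begin

definition ones_vec :: "nat \<Rightarrow> real vec" where "ones_vec n = vec n (\<lambda>_. 1)"

definition Gamma_tilde :: "real \<Rightarrow> real \<Rightarrow> nat \<Rightarrow> real mat" where
  "Gamma_tilde \<rho> T N = mat (N+1) (N+1) (\<lambda>(i,j).
     if i < j then 0 else if i = j then 1/2
     else exp (- \<rho> * (real i - real j) * T / real N))"

definition Gamma_mat :: "real \<Rightarrow> real \<Rightarrow> nat \<Rightarrow> real mat" where
  "Gamma_mat \<rho> T N = Gamma_tilde \<rho> T N + transpose_mat (Gamma_tilde \<rho> T N)"

text \<open>Matrix inverse via the library's Gauss-Jordan inverse (the matrices are invertible).\<close>
definition minv :: "real mat \<Rightarrow> real mat" where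
  "minv A = the (mat_inverse A)"

definition nu_vec :: "real \<Rightarrow> real \<Rightarrow> real \<Rightarrow> nat \<Rightarrow> real vec" where
  "nu_vec \<rho> T \<theta> N = minv (Gamma_mat \<rho> T N + Gamma_tilde \<rho> T N + (2*\<theta>) \<cdot>\<^sub>m 1\<^sub>m (N+1)) *\<^sub>v ones_vec (N+1)"

definition omega_vec :: "real \<Rightarrow> real \<Rightarrow> real \<Rightarrow> nat \<Rightarrow> real vec" where
  "omega_vec \<rho> T \<theta> N = minv (Gamma_mat \<rho> T N - Gamma_tilde \<rho> T N + (2*\<theta>) \<cdot>\<^sub>m 1\<^sub>m (N+1)) *\<^sub>v ones_vec (N+1)"

definition v_vec :: "real \<Rightarrow> real \<Rightarrow> real \<Rightarrow> nat \<Rightarrow> real vec" where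
  "v_vec \<rho> T \<theta> N = (1 / (ones_vec (N+1) \<bullet> nu_vec \<rho> T \<theta> N)) \<cdot>\<^sub>v nu_vec \<rho> T \<theta> N"

definition w_vec :: "real \<Rightarrow> real \<Rightarrow> real \<Rightarrow> nat \<Rightarrow> real vec" where
  "w_vec \<rho> T \<theta> N = (1 / (ones_vec (N+1) \<bullet> omega_vec \<rho> T \<theta> N)) \<cdot>\<^sub>v omega_vec \<rho> T \<theta> N"

end

theory Submission
  imports Defs "Jordan_Normal_Form.Determinant" "HOL-Real_Asymp.Real_Asymp"
begin

definition Mnu :: "real \<Rightarrow> real \<Rightarrow> nat \<Rightarrow> real mat" where
  "Mnu a k n = mat n n (\<lambda>(i,j). if j<i then 2*a^(i-j) else if i=j then k else a^(j-i))"
definition Bom :: "real \<Rightarrow> real \<Rightarrow> nat \<Rightarrow> real mat" where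
  "Bom a k n = mat n n (\<lambda>(i,j). if j<i then 0 else if i=j then k else a^(j-i))"

lemma Gt_entry: "j < i \<Longrightarrow> exp (- \<rho> * (real i - real j) * T / real N) = exp (- \<rho> * T / real N) ^ (i - j)"
proof -
  assume "j < i"
  hence "- \<rho> * (real i - real j) * T / real N = real (i-j) * (- \<rho> * T / real N)"
    by (cases "N=0") (simp_all add: of_nat_diff field_simps)
  thus ?thesis by (metis exp_of_nat_mult)
qed

lemma Gt_entry': "j < i \<Longrightarrow> exp (- (\<rho> * (real i - real j) * T / real N)) = exp (- (\<rho> * T / real N)) ^ (i - j)"
  using Gt_entry[of j i \<rho> T N] by simp

lemma Mnu_eq: "Gamma_mat \<rho> T N + Gamma_tilde \<rho> T N + (2*\<theta>) \<cdot>\<^sub>m 1\<^sub>m (N+1)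
   = Mnu (exp (- \<rho> * T / real N)) (3/2+2*\<theta>) (N+1)"
  apply (rule eq_matI)
  apply (auto simp: Mnu_def Gamma_mat_def Gamma_tilde_def)
  apply (rule Gt_entry'; simp)+
  done

lemma Bom_eq: "Gamma_mat \<rho> T N - Gamma_tilde \<rho> T N + (2*\<theta>) \<cdot>\<^sub>m 1\<^sub>m (N+1)
   = Bom (exp (- \<rho> * T / real N)) (1/2+2*\<theta>) (N+1)"
  apply (rule eq_matI)
  apply (auto simp: Bom_def Gamma_mat_def Gamma_tilde_def)
  apply (rule Gt_entry'; simp)+
  done

lemma sum_split3:
  fixes g :: "nat \<Rightarrow> real"
  assumes "i < n"
  shows "(\<Sum>j<n. g j) = (\<Sum>j<i. g j) + g i + (\<Sum>j\<in>{i<..<n}. g j)"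
proof -
  have "{..<n} = {..<i} \<union> {i} \<union> {i<..<n}" using assms by auto
  hence "(\<Sum>j<n. g j) = sum g ({..<i} \<union> {i} \<union> {i<..<n})" by simp
  also have "\<dots> = sum g {..<i} + g i + sum g {i<..<n}"
    by (subst sum.union_disjoint; auto)+
  finally show ?thesis .
qed

lemma Mnu_row: assumes "i < n"
  shows "(Mnu a k n *\<^sub>v vec n f) $ i = 2*(\<Sum>j<i. a^(i-j) * f j) + k * f i + (\<Sum>j\<in>{i<..<n}. a^(j-i) * f j)"
proof -
  have "(Mnu a k n *\<^sub>v vec n f) $ i = (\<Sum>j<n. (if j<i then 2*a^(i-j) else if i=j then k else a^(j-i)) * f j)"
    using assms by (simp add: Mnu_def scalar_prod_def atLeast0LessThan)
  also have "\<dots> = 2*(\<Sum>j<i. a^(i-j) * f j) + k * f i + (\<Sum>j\<in>{i<..<n}. a^(j-i) * f j)"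
    by (subst sum_split3[OF assms]) (simp add: sum_distrib_left mult.assoc)
  finally show ?thesis .
qed

lemma Bom_row: assumes "i < n"
  shows "(Bom a k n *\<^sub>v vec n f) $ i = k * f i + (\<Sum>j\<in>{i<..<n}. a^(j-i) * f j)"
proof -
  have "(Bom a k n *\<^sub>v vec n f) $ i = (\<Sum>j<n. (if j<i then 0 else if i=j then k else a^(j-i)) * f j)"
    using assms by (simp add: Bom_def scalar_prod_def atLeast0LessThan)
  also have "\<dots> = k * f i + (\<Sum>j\<in>{i<..<n}. a^(j-i) * f j)"
    by (subst sum_split3[OF assms]) simp
  finally show ?thesis .
qed

lemma sumL: fixes a z :: real shows "(a - z) * (\<Sum>j<i. a^(i-j) * z^j) = a*(a^i - z^i)"
proof (induction i)
  case 0 then show ?case by simp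
next
  case (Suc i)
  define S where "S = (\<Sum>j<i. a^(i-j) * z^j)"
  have "(\<Sum>j<Suc i. a^(Suc i-j) * z^j) = a * S + a * z^i"
    unfolding S_def by (simp add: sum_distrib_left Suc_diff_le mult.assoc)
  hence "(a - z) * (\<Sum>j<Suc i. a^(Suc i-j) * z^j) = (a - z) * (a * S + a * z^i)" by simp
  also have "\<dots> = a * ((a-z)*S) + a*z^i*(a-z)" by (simp add: algebra_simps)
  also have "(a-z)*S = a*(a^i - z^i)" using Suc.IH S_def by simp
  also have "a * (a*(a^i - z^i)) + a*z^i*(a-z) = a*(a^Suc i - z^Suc i)" by (simp add: algebra_simps)
  finally show ?case .
qed

lemma sumR_aux: fixes a z :: real shows "(1 - a*z) * (\<Sum>j\<in>{i<..<Suc i + d}. a^(j-i) * z^j) = a*z*z^i - a^(Suc i + d - i)*z^(Suc i + d)"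
proof (induction d)
  case 0
  have "{i<..<Suc i} = {}" by auto
  then show ?case by simp
next
  case (Suc d)
  define S where "S = (\<Sum>j\<in>{i<..<Suc i + d}. a^(j-i) * z^j)"
  have "{i<..<Suc i + Suc d} = insert (Suc i + d) {i<..<Suc i + d}" by auto
  hence "(\<Sum>j\<in>{i<..<Suc i + Suc d}. a^(j-i) * z^j) = a^(Suc d) * z^(Suc i + d) + S"
    unfolding S_def by simp
  moreover have "(1 - a*z)*S = a*z*z^i - a^(Suc d)*z^(Suc i + d)" using Suc.IH S_def by simp
  moreover have "(1 - a*z) * (a^(Suc d) * z^(Suc i + d) + S) = (1 - a*z)*S + (1 - a*z)*(a^(Suc d) * z^(Suc i + d))"
    by (simp add: algebra_simps)
  ultimately show ?case by (simp add: algebra_simps)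
qed

lemma sumR: fixes a z :: real shows "i < n \<Longrightarrow> (1 - a*z) * (\<Sum>j\<in>{i<..<n}. a^(j-i) * z^j) = a*z*z^i - a^(n - i)*z^n"
  using sumR_aux[of a z i "n - Suc i"] by simp

lemma sumW_aux: fixes a r :: real shows "(a - r) * (\<Sum>j\<in>{i<..<Suc i + d}. a^(j-i) * r^(i + d - j)) = a*(a^d - r^d)"
proof (induction d)
  case 0 
  have "{i<..<Suc i} = {}" by auto
  then show ?case by simp
next
  case (Suc d)
  define S where "S = (\<Sum>j\<in>{i<..<Suc i + d}. a^(j-i) * r^(i + d - j))"
  have "{i<..<Suc i + Suc d} = insert (Suc i + d) {i<..<Suc i + d}" by auto
  hence "(\<Sum>j\<in>{i<..<Suc i + Suc d}. a^(j-i) * r^(i + Suc d - j)) = a^(Suc d) + (\<Sum>j\<in>{i<..<Suc i + d}. a^(j-i) * r^(i + Suc d - j))"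
    by simp
  also have "(\<Sum>j\<in>{i<..<Suc i + d}. a^(j-i) * r^(i + Suc d - j)) = r * S"
    unfolding S_def by (auto simp: sum_distrib_left intro!: sum.cong simp: Suc_diff_le)
  finally have e: "(\<Sum>j\<in>{i<..<Suc i + Suc d}. a^(j-i) * r^(i + Suc d - j)) = a^(Suc d) + r * S" .
  have "(a - r) * (\<Sum>j\<in>{i<..<Suc i + Suc d}. a^(j-i) * r^(i + Suc d - j)) = (a - r) * (a^(Suc d) + r * S)"
    using e by simp
  also have "\<dots> = (a-r)*a^(Suc d) + r * ((a - r)*S)" by (simp add: algebra_simps)
  also have "(a - r)*S = a*(a^d - r^d)" using Suc.IH S_def by simp
  also have "(a-r)*a^(Suc d) + r * (a*(a^d - r^d)) = a*(a^Suc d - r^Suc d)" by (simp add: algebra_simps)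
  finally show ?case by simp
qed

lemma sumW: fixes a r :: real shows "i < n \<Longrightarrow> (a - r) * (\<Sum>j\<in>{i<..<n}. a^(j-i) * r^(n - 1 - j)) = a*(a^(n-1-i) - r^(n-1-i))"
  using sumW_aux[of a r i "n - Suc i"] by simp

lemma sum_apow: fixes a :: real shows "i < n \<Longrightarrow> a \<noteq> 1 \<Longrightarrow> (\<Sum>j\<in>{i<..<n}. a^(j-i)) = (a - a^(n-i))/(1-a)"
  using sumR[of i n a 1] by (simp add: field_simps)

lemma om_solves:
  fixes a c :: real
  assumes a: "0 < a" "a < 1" and c: "c > 0" and i: "i < n"
  defines "P \<equiv> (1-a)/(c*(1-a)+a)" and "Q \<equiv> a/(c*(c*(1-a)+a))" and "r \<equiv> a*(c-1)/c"
  shows "(Bom a c n *\<^sub>v vec n (\<lambda>j. P + Q * r^(n-1-j))) $ i = 1"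
proof -
  define m where "m = n - 1 - i"
  have nm: "n - i = Suc m" using i m_def by simp
  have pos: "c*(1-a)+a > 0" using a c by (simp add: add_pos_nonneg)
  have ar: "a - r = a / c" unfolding r_def using c by (simp add: field_simps)
  have arne: "a - r \<noteq> 0" using ar a c by simp
  have SW: "(\<Sum>j\<in>{i<..<n}. a^(j-i) * r^(n - 1 - j)) = c * (a^m - r^m)"
  proof -
    have "(a - r) * (\<Sum>j\<in>{i<..<n}. a^(j-i) * r^(n - 1 - j)) = a*(a^m - r^m)"
      using sumW[OF i, of a r] m_def by simp
    hence "(\<Sum>j\<in>{i<..<n}. a^(j-i) * r^(n - 1 - j)) = a*(a^m - r^m) / (a - r)"
      using arne by (simp add: field_simps)
    also have "a*(a^m - r^m) / (a - r) = c * (a^m - r^m)" unfolding ar using a c by simp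
    finally show ?thesis .
  qed
  have S1: "(\<Sum>j\<in>{i<..<n}. a^(j-i)) = (a - a*a^m)/(1-a)"
    using sum_apow[OF i, of a] a nm by simp
  have "(Bom a c n *\<^sub>v vec n (\<lambda>j. P + Q * r^(n-1-j))) $ i
      = c * (P + Q * r^m) + (\<Sum>j\<in>{i<..<n}. a^(j-i) * (P + Q * r^(n-1-j)))"
    using Bom_row[OF i] m_def by simp
  also have "(\<Sum>j\<in>{i<..<n}. a^(j-i) * (P + Q * r^(n-1-j))) = P * (\<Sum>j\<in>{i<..<n}. a^(j-i)) + Q * (\<Sum>j\<in>{i<..<n}. a^(j-i) * r^(n - 1 - j))"
    by (simp add: sum.distrib sum_distrib_left algebra_simps)
  also have "c * (P + Q * r^m) + (P * (\<Sum>j\<in>{i<..<n}. a^(j-i)) + Q * (\<Sum>j\<in>{i<..<n}. a^(j-i) * r^(n - 1 - j)))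
      = c * P + P * (a - a*a^m)/(1-a) + a^m * (Q * c)"
    unfolding SW S1 by (simp add: algebra_simps)
  also have "\<dots> = 1"
  proof -
    define D where "D = c*(1-a)+a"
    have D: "D \<noteq> 0" using pos D_def by simp
    have a1: "1 - a \<noteq> 0" using a by simp
    have e1: "c * P = c*(1-a)/D" unfolding P_def D_def by simp
    have e2: "P * (a - a*a^m)/(1-a) = a*(1-a^m)/D" unfolding P_def D_def[symmetric] using a1 D
      by (simp add: field_simps)
    have e3: "a^m * (Q * c) = a^m*a/D" unfolding Q_def D_def[symmetric] using c D by (simp add: field_simps)
    have "c*(1-a)/D + a*(1-a^m)/D + a^m*a/D = (c*(1-a) + a*(1-a^m) + a^m*a)/D" by (simp add: add_divide_distrib)
    also have "\<dots> = D/D" unfolding D_def by (simp add: algebra_simps)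
    finally show ?thesis using e1 e2 e3 D by simp
  qed
  finally show ?thesis .
qed

definition phi :: "real \<Rightarrow> real \<Rightarrow> real \<Rightarrow> real" where
  "phi a k z = 2*a/(z-a) + k + a*z/(1-a*z)"

lemma Tz:
  fixes a k z :: real
  assumes "z \<noteq> a" "a*z \<noteq> 1" "i < n"
  shows "2*(\<Sum>j<i. a^(i-j) * z^j) + k * z^i + (\<Sum>j\<in>{i<..<n}. a^(j-i) * z^j)
       = z^i * phi a k z - 2*a*a^i*(1/(z-a)) - a^(n-i)*(z^n/(1-a*z))"
proof -
  have d1: "a - z \<noteq> 0" "z - a \<noteq> 0" using assms by auto
  have d2: "1 - a*z \<noteq> 0" using assms by auto
  have L0: "(z - a) * (\<Sum>j<i. a^(i-j) * z^j) = a*(z^i - a^i)"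
    using sumL[of a z i] by (simp add: algebra_simps)
  have L: "(\<Sum>j<i. a^(i-j) * z^j) = a*(z^i - a^i)/(z-a)"
    using L0 d1 by (simp add: field_simps)
  have R: "(\<Sum>j\<in>{i<..<n}. a^(j-i) * z^j) = (a*z*z^i - a^(n - i)*z^n)/(1-a*z)"
    using sumR[OF assms(3), of a z] d2 by (simp add: field_simps)
  have c1: "2*(a*(z^i - a^i)/(z-a)) = z^i*(2*a/(z-a)) - 2*a*a^i*(1/(z-a))"
  proof -
    have "z^i*(2*a/(z-a)) - 2*a*a^i*(1/(z-a)) = (z^i*(2*a) - 2*a*a^i)/(z-a)"
      by (simp add: diff_divide_distrib)
    also have "\<dots> = 2*(a*(z^i - a^i))/(z-a)" by (simp add: algebra_simps)
    finally show ?thesis by simp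
  qed
  have c2: "(a*z*z^i - a^(n - i)*z^n)/(1-a*z) = z^i*(a*z/(1-a*z)) - a^(n-i)*(z^n/(1-a*z))"
  proof -
    have "z^i*(a*z/(1-a*z)) - a^(n-i)*(z^n/(1-a*z)) = (z^i*(a*z) - a^(n-i)*z^n)/(1-a*z)"
      by (simp add: diff_divide_distrib)
    thus ?thesis by (simp add: algebra_simps)
  qed
  show ?thesis unfolding L R c1 c2 phi_def by (simp add: algebra_simps)
qed

lemma nu_solves:
  fixes a k z1 z2 s \<beta> \<gamma> :: real
  assumes z: "z1 \<noteq> a" "z2 \<noteq> a" "a*z1 \<noteq> 1" "a*z2 \<noteq> 1" and a: "a \<noteq> 1"
    and ph: "phi a k z1 = 0" "phi a k z2 = 0" and i: "i < n"
    and s: "s * (3*a + k*(1-a)) = 1"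
    and e1: "s + \<beta>/(z1-a) + \<gamma>/(z2-a) = 0"
    and e2: "s + \<beta>*(z1^n/(1-a*z1)) + \<gamma>*(z2^n/(1-a*z2)) = 0"
  shows "(Mnu a k n *\<^sub>v vec n (\<lambda>j. s*(1-a) + \<beta>*z1^j + \<gamma>*z2^j)) $ i = 1"
proof -
  define \<alpha> where "\<alpha> = s*(1-a)"
  define T where "T z = 2*(\<Sum>j<i. a^(i-j) * z^j) + k * z^i + (\<Sum>j\<in>{i<..<n}. a^(j-i) * z^j)" for z
  have row: "(Mnu a k n *\<^sub>v vec n (\<lambda>j. \<alpha> + \<beta>*z1^j + \<gamma>*z2^j)) $ i = \<alpha> * T 1 + \<beta> * T z1 + \<gamma> * T z2"
    unfolding Mnu_row[OF i] T_def
    by (simp add: sum.distrib sum_distrib_left algebra_simps)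
  have a1: "1 \<noteq> a" "a * 1 \<noteq> 1" using a by auto
  have T1: "T 1 = phi a k 1 - 2*a*a^i*(1/(1-a)) - a^(n-i)*(1/(1-a))"
    unfolding T_def using Tz[OF a1 i, of k] by simp
  have Tz1: "T z1 = - 2*a*a^i*(1/(z1-a)) - a^(n-i)*(z1^n/(1-a*z1))"
    unfolding T_def using Tz[OF z(1) z(3) i, of k] ph by simp
  have Tz2: "T z2 = - 2*a*a^i*(1/(z2-a)) - a^(n-i)*(z2^n/(1-a*z2))"
    unfolding T_def using Tz[OF z(2) z(4) i, of k] ph by simp
  have comb: "\<alpha> * T 1 + \<beta> * T z1 + \<gamma> * T z2 = \<alpha> * phi a k 1
     - 2*a*a^i*(\<alpha>*(1/(1-a)) + \<beta>*(1/(z1-a)) + \<gamma>*(1/(z2-a)))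
     - a^(n-i)*(\<alpha>*(1/(1-a)) + \<beta>*(z1^n/(1-a*z1)) + \<gamma>*(z2^n/(1-a*z2)))"
    unfolding T1 Tz1 Tz2 by (simp add: algebra_simps)
  have as: "\<alpha>*(1/(1-a)) = s" unfolding \<alpha>_def using a by simp
  have ap: "\<alpha> * phi a k 1 = 1"
  proof -
    have a1': "1 - a \<noteq> 0" using a by simp
    have h: "(1-a)*(2*a/(1-a)) = 2*a" "(1-a)*(a/(1-a)) = a" using a1' by simp_all
    have "(1-a)*(2*a/(1-a) + k + a*1/(1-a*1)) = 3*a + k*(1-a)"
      using a by (simp add: distrib_left h)
    hence "\<alpha> * phi a k 1 = s * (3*a + k*(1-a))" unfolding \<alpha>_def phi_def
      using a by (simp add: mult.assoc)
    thus ?thesis using s by simp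
  qed
  have "(Mnu a k n *\<^sub>v vec n (\<lambda>j. s*(1-a) + \<beta>*z1^j + \<gamma>*z2^j)) $ i = \<alpha> * T 1 + \<beta> * T z1 + \<gamma> * T z2"
    using row \<alpha>_def by simp
  also have "\<dots> = 1" unfolding comb as ap using e1 e2 by simp
  finally show ?thesis .
qed

lemma minv_apply:
  fixes A :: "real mat"
  assumes A: "A \<in> carrier_mat n n" and x: "x \<in> carrier_vec n" and Ax: "A *\<^sub>v x = ones_vec n"
    and d: "det A \<noteq> 0"
  shows "minv A *\<^sub>v ones_vec n = x"
proof -
  have U: "A \<in> Units (ring_mat TYPE(real) n ())" by (rule det_non_zero_imp_unit[OF A d])
  have "mat_inverse A \<noteq> None" using mat_inverse(1)[OF A, of "()"] U by blast
  then obtain B where B: "mat_inverse A = Some B" by auto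
  from mat_inverse(2)[OF A B] have BA: "B * A = 1\<^sub>m n" and Bc: "B \<in> carrier_mat n n" by auto
  have "minv A = B" unfolding minv_def B by simp
  hence "minv A *\<^sub>v ones_vec n = B *\<^sub>v (A *\<^sub>v x)" using Ax by simp
  also have "\<dots> = (B * A) *\<^sub>v x" using Bc A x by simp
  also have "\<dots> = x" using BA x by simp
  finally show ?thesis .
qed

lemma Bom_det: "c \<noteq> 0 \<Longrightarrow> det (Bom a c n) \<noteq> 0"
proof -
  assume c: "c \<noteq> 0"
  have ut: "upper_triangular (Bom a c n)" unfolding upper_triangular_def Bom_def by auto
  have "det (Bom a c n) = prod_list (diag_mat (Bom a c n))"
    by (rule det_upper_triangular[OF ut, of n]) (simp add: Bom_def)
  also have "diag_mat (Bom a c n) = map (\<lambda>i. c) [0..<n]"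
    unfolding diag_mat_def Bom_def by auto
  also have "prod_list (map (\<lambda>i. c) [0..<n]) = c^n" by (simp add: map_replicate_const)
  finally show ?thesis using c by simp
qed

lemma quad_pos_aux:
  fixes a :: real and x :: "nat \<Rightarrow> real"
  defines "F \<equiv> \<lambda>i. \<Sum>j<i. a^(i-j) * x j"
  defines "y \<equiv> \<lambda>m. \<Sum>j<Suc m. a^(m-j) * x j"
  shows "(\<Sum>i<Suc m. x i * (F i + x i / 2)) = (y m)^2/2 + (1-a^2)/2 * (\<Sum>i<m. (y i)^2)"
proof (induction m)
  case 0 then show ?case by (simp add: F_def y_def power2_eq_square)
next
  case (Suc m)
  have Fs: "F (Suc m) = a * y m" unfolding F_def y_def
    by (simp add: sum_distrib_left Suc_diff_le mult.assoc del: sum.lessThan_Suc)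
  have ys: "y (Suc m) = a * y m + x (Suc m)" 
  proof -
    have "y (Suc m) = F (Suc m) + x (Suc m)" unfolding F_def y_def by simp
    thus ?thesis using Fs by simp
  qed
  have "(\<Sum>i<Suc (Suc m). x i * (F i + x i / 2)) = (\<Sum>i<Suc m. x i * (F i + x i / 2)) + x (Suc m) * (F (Suc m) + x (Suc m)/2)"
    by simp
  also have "\<dots> = (y m)^2/2 + (1-a^2)/2 * (\<Sum>i<m. (y i)^2) + x (Suc m) * (a * y m + x (Suc m)/2)"
    using Suc.IH Fs by simp
  also have "\<dots> = (y (Suc m))^2/2 + (1-a^2)/2 * (\<Sum>i<Suc m. (y i)^2)"
    unfolding ys by (simp add: power2_eq_square field_simps)
  finally show ?case .
qed

lemma quad_pos:
  fixes a :: real and x :: "nat \<Rightarrow> real"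
  assumes "0 \<le> a" "a \<le> 1"
  shows "(\<Sum>i<n. x i * ((\<Sum>j<i. a^(i-j) * x j) + x i / 2)) \<ge> 0"
proof (cases n)
  case 0 then show ?thesis by simp
next
  case (Suc m)
  have "a^2 \<le> 1" using assms by (simp add: power_le_one)
  hence "(1-a^2)/2 * (\<Sum>i<m. (\<Sum>j<Suc i. a^(i-j) * x j)^2) \<ge> 0"
    by (intro mult_nonneg_nonneg sum_nonneg) auto
  then show ?thesis unfolding Suc using quad_pos_aux[of x a m] by simp
qed

lemma swap_tri:
  fixes a :: real and x :: "nat \<Rightarrow> real"
  shows "(\<Sum>i<n. x i * (\<Sum>j\<in>{i<..<n}. a^(j-i) * x j)) = (\<Sum>i<n. x i * (\<Sum>j<i. a^(i-j) * x j))"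
proof -
  have l: "(\<Sum>i<n. x i * (\<Sum>j\<in>{i<..<n}. a^(j-i) * x j)) = (\<Sum>i<n. \<Sum>j<n. if i < j then x i * (a^(j-i) * x j) else 0)"
  proof (rule sum.cong[OF refl])
    fix i assume "i \<in> {..<n}"
    have st: "{i<..<n} = {j\<in>{..<n}. i < j}" by auto
    have "(\<Sum>j\<in>{i<..<n}. a^(j-i) * x j) = (\<Sum>j<n. if i < j then a^(j-i) * x j else 0)"
      unfolding st by (rule sum.inter_filter) simp
    thus "x i * (\<Sum>j\<in>{i<..<n}. a^(j-i) * x j) = (\<Sum>j<n. if i < j then x i * (a^(j-i) * x j) else 0)"
      by (auto simp: sum_distrib_left intro!: sum.cong)
  qed
  have r: "(\<Sum>i<n. x i * (\<Sum>j<i. a^(i-j) * x j)) = (\<Sum>i<n. \<Sum>j<n. if j < i then x i * (a^(i-j) * x j) else 0)"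
  proof (rule sum.cong[OF refl])
    fix i assume "i \<in> {..<n}"
    hence st: "{..<i} = {j\<in>{..<n}. j < i}" by auto
    have "(\<Sum>j<i. a^(i-j) * x j) = (\<Sum>j<n. if j < i then a^(i-j) * x j else 0)"
      unfolding st by (rule sum.inter_filter) simp
    thus "x i * (\<Sum>j<i. a^(i-j) * x j) = (\<Sum>j<n. if j < i then x i * (a^(i-j) * x j) else 0)"
      by (auto simp: sum_distrib_left intro!: sum.cong)
  qed
  show ?thesis unfolding l r
    by (subst sum.swap) (auto intro!: sum.cong simp: algebra_simps)
qed

lemma Mnu_det:
  fixes a k :: real
  assumes a: "0 \<le> a" "a \<le> 1" and k: "k > 3/2"
  shows "det (Mnu a k n) \<noteq> 0"
proof
  assume "det (Mnu a k n) = 0"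
  then obtain v where v: "v \<in> carrier_vec n" "v \<noteq> 0\<^sub>v n" "Mnu a k n *\<^sub>v v = 0\<^sub>v n"
    using det_0_iff_vec_prod_zero_field[of "Mnu a k n" n] by (auto simp: Mnu_def)
  define x where "x i = v $ i" for i
  have vv: "v = vec n x" using v(1) unfolding x_def by auto
  define F where "F i = (\<Sum>j<i. a^(i-j) * x j)" for i
  define B where "B i = (\<Sum>j\<in>{i<..<n}. a^(j-i) * x j)" for i
  have row0: "2 * F i + k * x i + B i = 0" if "i < n" for i
    using v(3) Mnu_row[OF that, of a k x] that unfolding vv F_def B_def
    by (metis index_zero_vec(1))
  have "0 = (\<Sum>i<n. x i * (2 * F i + k * x i + B i))" using row0 by simp
  also have "\<dots> = 2*(\<Sum>i<n. x i * F i) + k*(\<Sum>i<n. x i * x i) + (\<Sum>i<n. x i * B i)"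
    by (simp add: sum.distrib sum_distrib_left algebra_simps)
  also have "(\<Sum>i<n. x i * B i) = (\<Sum>i<n. x i * F i)" unfolding B_def F_def by (rule swap_tri)
  finally have e0: "0 = 2*(\<Sum>i<n. x i * F i) + k*(\<Sum>i<n. x i * x i) + (\<Sum>i<n. x i * F i)" .
  have "(\<Sum>i<n. x i * (F i + x i / 2)) = (\<Sum>i<n. x i * F i + (x i * x i) / 2)"
    by (simp add: algebra_simps)
  also have "\<dots> = (\<Sum>i<n. x i * F i) + (\<Sum>i<n. x i * x i) / 2"
    by (simp add: sum.distrib sum_divide_distrib)
  finally have e1: "(\<Sum>i<n. x i * (F i + x i / 2)) = (\<Sum>i<n. x i * F i) + (\<Sum>i<n. x i * x i) / 2" .
  have e: "0 = 3 * (\<Sum>i<n. x i * (F i + x i / 2)) + (k - 3/2) * (\<Sum>i<n. x i * x i)"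
    using e0 unfolding e1 by (simp add: algebra_simps)
  have q: "(\<Sum>i<n. x i * (F i + x i / 2)) \<ge> 0" unfolding F_def by (rule quad_pos[OF a])
  have s: "(\<Sum>i<n. x i * x i) \<ge> 0" by (simp add: sum_nonneg)
  have "(k - 3/2) * (\<Sum>i<n. x i * x i) \<le> 0" using e q by linarith
  moreover have "(k - 3/2) > 0" using k by simp
  ultimately have "(\<Sum>i<n. x i * x i) \<le> 0" by (simp add: mult_le_0_iff)
  hence "(\<Sum>i<n. x i * x i) = 0" using s by linarith
  hence "\<forall>i\<in>{..<n}. x i * x i = 0" by (subst (asm) sum_nonneg_eq_0_iff) auto
  hence "v = 0\<^sub>v n" unfolding vv by (auto simp: x_def)
  thus False using v(2) by simp
qed

lemma lim_a: "(\<lambda>N. exp (- c / real N)) \<longlonglongrightarrow> 1" by real_asymp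

lemma lim_Neps: "c > 0 \<Longrightarrow> (\<lambda>N. real (N+1) * (1 - exp (- c / real N))) \<longlonglongrightarrow> c" by real_asymp

lemma lim_ln: "((\<lambda>x::real. ln (1+x)/x) \<longlongrightarrow> 1) (at 0)" by real_asymp

lemma lim_pow0:
  fixes f :: "nat \<Rightarrow> real"
  assumes f: "f \<longlonglongrightarrow> L" and L: "\<bar>L\<bar> < 1"
  shows "(\<lambda>N. f N ^ (N+1)) \<longlonglongrightarrow> 0"
proof -
  define q where "q = (1 + \<bar>L\<bar>)/2"
  have q: "\<bar>L\<bar> < q" "q < 1" "0 \<le> q" using L by (auto simp: q_def)
  have "eventually (\<lambda>N. \<bar>f N\<bar> < q) sequentially"
  proof -
    have "(\<lambda>N. \<bar>f N\<bar>) \<longlonglongrightarrow> \<bar>L\<bar>" using f by (rule tendsto_rabs)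
    thus ?thesis using q(1) by (rule order_tendstoD)
  qed
  moreover have "\<bar>x\<bar> < q \<Longrightarrow> norm (x ^ (N+1)) \<le> norm (q ^ (N+1)) * 1" for x :: real and N
  proof -
    assume x: "\<bar>x\<bar> < q"
    have "\<bar>x\<bar>^(N+1) \<le> q^(N+1)" by (rule power_mono) (use x in auto)
    thus ?thesis using q(3) by (simp only: real_norm_def power_abs mult_1_right abs_of_nonneg zero_le_power)
  qed
  ultimately have ev: "eventually (\<lambda>N. norm (f N ^ (N+1)) \<le> norm (q ^ (N+1)) * 1) sequentially"
    by (auto elim: eventually_mono)
  have "(\<lambda>N. q ^ (N+1)) \<longlonglongrightarrow> 0"
    using LIMSEQ_power_zero[of q] q by (simp add: LIMSEQ_Suc)
  thus ?thesis using ev by (rule tendsto_0_le)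
qed

lemma dot_normalized:
  fixes g :: "nat \<Rightarrow> real"
  shows "((1/(ones_vec n \<bullet> vec n g)) \<cdot>\<^sub>v vec n g) \<bullet> ((1/(ones_vec n \<bullet> vec n g)) \<cdot>\<^sub>v vec n g)
     = (\<Sum>j<n. (g j)^2) / (\<Sum>j<n. g j)^2"
proof -
  have o: "ones_vec n \<bullet> vec n g = (\<Sum>j<n. g j)"
    by (simp add: ones_vec_def scalar_prod_def atLeast0LessThan)
  have d: "vec n g \<bullet> vec n g = (\<Sum>j<n. (g j)^2)"
    by (simp add: scalar_prod_def atLeast0LessThan power2_eq_square)
  have c: "vec n g \<in> carrier_vec n" by simp
  show ?thesis unfolding o
    by (simp add: smult_scalar_prod_distrib[OF _ c] scalar_prod_smult_distrib[OF c] d power2_eq_square)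
qed

lemma a_bounds: assumes "\<rho> > 0" "T > 0" "N \<ge> 1"
  shows "0 < exp (- \<rho> * T / real N)" "exp (- \<rho> * T / real N) < 1"
proof -
  have "- \<rho> * T / real N < 0" using assms by (simp add: divide_neg_pos mult_pos_pos)
  thus "exp (- \<rho> * T / real N) < 1" by simp
qed simp

lemma omega_vec_eq:
  assumes r: "\<rho> > 0" "T > 0" and th: "\<theta> > 0" and N: "N \<ge> 1"
  defines "a \<equiv> exp (- \<rho> * T / real N)" and "c \<equiv> 1/2 + 2*\<theta>"
  shows "omega_vec \<rho> T \<theta> N = vec (N+1) (\<lambda>j. (1-a)/(c*(1-a)+a) + a/(c*(c*(1-a)+a)) * (a*(c-1)/c)^(N+1-1-j))"
proof -
  have a: "0 < a" "a < 1" using a_bounds[OF r N] a_def by auto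
  have c: "c > 0" using th c_def by simp
  let ?x = "vec (N+1) (\<lambda>j. (1-a)/(c*(1-a)+a) + a/(c*(c*(1-a)+a)) * (a*(c-1)/c)^(N+1-1-j))"
  have A: "Bom a c (N+1) \<in> carrier_mat (N+1) (N+1)" by (simp add: Bom_def)
  have Ax: "Bom a c (N+1) *\<^sub>v ?x = ones_vec (N+1)"
  proof (rule eq_vecI)
    fix i assume "i < dim_vec (ones_vec (N+1))"
    hence i: "i < N+1" by (simp add: ones_vec_def)
    show "(Bom a c (N+1) *\<^sub>v ?x) $ i = ones_vec (N+1) $ i"
      using om_solves[OF a c i] i by (simp add: ones_vec_def)
  qed (simp add: ones_vec_def Bom_def)
  show ?thesis unfolding omega_vec_def Bom_eq a_def[symmetric] c_def[symmetric]
    by (rule minv_apply[OF A _ Ax Bom_det]) (use c in auto)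
qed

lemma w_limit_core:
  fixes \<rho> T \<theta> :: real
  assumes r: "\<rho> > 0" "T > 0" and th: "\<theta> > 0"
  defines "c \<equiv> 1/2 + 2*\<theta>"
  fixes a m D r :: "nat \<Rightarrow> real"
  assumes a_def: "\<And>N. a N = exp (- \<rho> * T / real N)"
  and m_def: "\<And>N. m N = real (N+1) * (1 - a N)"
  and D_def: "\<And>N. D N = c*(1-a N) + a N"
  and r_def: "\<And>N. r N = a N*(c-1)/c"
  shows "(\<lambda>N. m N/D N + (a N/(c*D N))*(1 - r N^(N+1))/(1 - r N)) \<longlonglongrightarrow> \<rho>*T + 1"
    and "(\<lambda>N. (m N/D N) * ((1-a N)/D N) + 2*((1-a N)/D N)*(a N/(c*D N))*(1 - r N^(N+1))/(1 - r N)
           + (a N/(c*D N))^2*(1-(r N*r N)^(N+1))/(1 - r N*r N)) \<longlonglongrightarrow> 1/(4*\<theta>)"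
proof -
  have c: "c > 1/2" using th c_def by simp
  have la: "a \<longlonglongrightarrow> 1" unfolding a_def using lim_a[of "\<rho>*T"] by simp
  have lm: "m \<longlonglongrightarrow> \<rho>*T" unfolding m_def a_def using lim_Neps[of "\<rho>*T"] r by simp
  have lD: "D \<longlonglongrightarrow> c*(1-1) + 1" unfolding D_def by (intro tendsto_intros la)
  have lr: "r \<longlonglongrightarrow> 1*(c-1)/c" unfolding r_def by (intro tendsto_intros la) (use c in simp)
  have ab: "\<bar>(c-1)/c\<bar> < 1" using c by (simp add: abs_less_iff field_simps)
  have lR1: "(\<lambda>N. r N^(N+1)) \<longlonglongrightarrow> 0" by (rule lim_pow0[OF _ ab]) (use lr in simp)
  have sq: "((c-1)/c)^2 < 1" using ab by (simp only: abs_square_less_1)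
  have ab2: "\<bar>(c-1)/c * ((c-1)/c)\<bar> < 1" using sq by (simp add: power2_eq_square)
  have lrr: "(\<lambda>N. r N * r N) \<longlonglongrightarrow> (c-1)/c * ((c-1)/c)" using lr by (intro tendsto_intros) simp_all
  have lR2: "(\<lambda>N. (r N * r N)^(N+1)) \<longlonglongrightarrow> 0" by (rule lim_pow0[OF lrr ab2])
  have c0: "c \<noteq> 0" using c by simp
  have d1: "1 - (c-1)/c \<noteq> 0" using c0 by (simp add: field_simps)
  have d2: "1 - (c-1)/c * ((c-1)/c) \<noteq> 0"
  proof
    assume "1 - (c-1)/c * ((c-1)/c) = 0"
    hence "(c-1)/c * ((c-1)/c) = 1" by (simp only: right_minus_eq eq_commute)
    thus False using ab2 by (metis abs_one less_irrefl)
  qed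
  have "(\<lambda>N. m N/D N + (a N/(c*D N))*(1 - r N^(N+1))/(1 - r N)) \<longlonglongrightarrow>
        \<rho>*T/(c*(1-1) + 1) + (1/(c*(c*(1-1) + 1)))*(1 - 0)/(1 - 1*(c-1)/c)"
    using d1 c0 by (intro tendsto_intros lm lD la lR1 lr) simp_all
  also have "\<rho>*T/(c*(1-1) + 1) + (1/(c*(c*(1-1) + 1)))*(1 - 0)/(1 - 1*(c-1)/c) = \<rho>*T + 1"
    using c0 by (simp add: field_simps)
  finally show "(\<lambda>N. m N/D N + (a N/(c*D N))*(1 - r N^(N+1))/(1 - r N)) \<longlonglongrightarrow> \<rho>*T + 1" .
  have "(\<lambda>N. (m N/D N) * ((1-a N)/D N) + 2*((1-a N)/D N)*(a N/(c*D N))*(1 - r N^(N+1))/(1 - r N)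
           + (a N/(c*D N))^2*(1-(r N*r N)^(N+1))/(1 - r N*r N)) \<longlonglongrightarrow>
        (\<rho>*T/(c*(1-1) + 1)) * ((1-1)/(c*(1-1) + 1)) + 2*((1-1)/(c*(1-1) + 1))*(1/(c*(c*(1-1) + 1)))*(1 - 0)/(1 - 1*(c-1)/c)
           + (1/(c*(c*(1-1) + 1)))^2*(1-0)/(1 - (c-1)/c * ((c-1)/c))"
    using d1 d2 c0 by (intro tendsto_intros lm lD la lR1 lr lR2 lrr) simp_all
  also have "(\<rho>*T/(c*(1-1) + 1)) * ((1-1)/(c*(1-1) + 1)) + 2*((1-1)/(c*(1-1) + 1))*(1/(c*(c*(1-1) + 1)))*(1 - 0)/(1 - 1*(c-1)/c)
           + (1/(c*(c*(1-1) + 1)))^2*(1-0)/(1 - (c-1)/c * ((c-1)/c)) = 1/(4*\<theta>)"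
  proof -
    have e1: "c*c - (c-1)*(c-1) = 4*\<theta>" unfolding c_def by (simp add: algebra_simps)
    have "1 - (c-1)/c * ((c-1)/c) = (c*c - (c-1)*(c-1))/(c*c)" using c0 by (simp add: field_simps)
    hence e2: "1 - (c-1)/c * ((c-1)/c) = 4*\<theta>/(c*c)" unfolding e1 .
    show ?thesis unfolding e2 using c0 th by (simp add: field_simps power2_eq_square)
  qed
  finally show "(\<lambda>N. (m N/D N) * ((1-a N)/D N) + 2*((1-a N)/D N)*(a N/(c*D N))*(1 - r N^(N+1))/(1 - r N)
           + (a N/(c*D N))^2*(1-(r N*r N)^(N+1))/(1 - r N*r N)) \<longlonglongrightarrow> 1/(4*\<theta>)" .
qed

lemma sums_P_Q:
  fixes P Q r :: real
  assumes r1: "r \<noteq> 1" and r2: "r*r \<noteq> 1"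
  shows "(\<Sum>j<Suc N. P + Q * r^(N - j)) = real (Suc N) * P + Q*(1 - r^(Suc N))/(1-r)"
    and "(\<Sum>j<Suc N. (P + Q * r^(N - j))^2) = real (Suc N) * P * P + 2*P*Q*(1 - r^(Suc N))/(1-r) + Q^2*(1 - (r*r)^(Suc N))/(1-r*r)"
proof -
  have re: "(\<Sum>j<Suc N. f (N - j)) = (\<Sum>j<Suc N. f j)" for f :: "nat \<Rightarrow> real"
    using sum.nat_diff_reindex[of f "Suc N"] by simp
  have g1: "(\<Sum>j<Suc N. r^j) = (1 - r^(Suc N))/(1-r)" using r1 by (simp only: sum_gp_strict if_False)
  have g2: "(\<Sum>j<Suc N. (r*r)^j) = (1 - (r*r)^(Suc N))/(1-r*r)" using r2 by (simp only: sum_gp_strict if_False)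
  have "(\<Sum>j<Suc N. P + Q * r^(N - j)) = (\<Sum>j<Suc N. P + Q * r^j)"
    using re[of "\<lambda>j. P + Q * r^j"] by simp
  also have "\<dots> = real (Suc N) * P + Q * (\<Sum>j<Suc N. r^j)"
    by (simp add: sum.distrib sum_distrib_left del: sum.lessThan_Suc)
  finally show "(\<Sum>j<Suc N. P + Q * r^(N - j)) = real (Suc N) * P + Q*(1 - r^(Suc N))/(1-r)"
    unfolding g1 by simp
  have "(\<Sum>j<Suc N. (P + Q * r^(N - j))^2) = (\<Sum>j<Suc N. (P + Q * r^j)^2)"
    using re[of "\<lambda>j. (P + Q * r^j)^2"] by simp
  also have "\<dots> = (\<Sum>j<Suc N. P*P + 2*P*Q * r^j + Q^2 * (r*r)^j)"
    by (rule sum.cong) (simp_all add: power2_eq_square power_mult_distrib algebra_simps)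
  also have "\<dots> = real (Suc N) * P * P + 2*P*Q * (\<Sum>j<Suc N. r^j) + Q^2 * (\<Sum>j<Suc N. (r*r)^j)"
    by (simp add: sum.distrib sum_distrib_left del: sum.lessThan_Suc)
  finally show "(\<Sum>j<Suc N. (P + Q * r^(N - j))^2) = real (Suc N) * P * P + 2*P*Q*(1 - r^(Suc N))/(1-r) + Q^2*(1 - (r*r)^(Suc N))/(1-r*r)"
    unfolding g1 g2 by simp
qed

lemma w_limit:
  fixes \<rho> T \<theta> :: real
  assumes r: "\<rho> > 0" "T > 0" and th: "\<theta> > 0"
  shows "(\<lambda>N. \<theta> * (w_vec \<rho> T \<theta> N \<bullet> w_vec \<rho> T \<theta> N)) \<longlonglongrightarrow> 1 / (4 * (\<rho>*T + 1)^2)"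
proof -
  define c where "c = 1/2 + 2*\<theta>"
  define a where "a N = exp (- \<rho> * T / real N)" for N
  define m where "m N = real (N+1) * (1 - a N)" for N
  define D where "D N = c*(1-a N) + a N" for N
  define r where "r N = a N*(c-1)/c" for N
  define S1 where "S1 N = m N/D N + (a N/(c*D N))*(1 - r N^(N+1))/(1 - r N)" for N
  define S2 where "S2 N = (m N/D N) * ((1-a N)/D N) + 2*((1-a N)/D N)*(a N/(c*D N))*(1 - r N^(N+1))/(1 - r N)
           + (a N/(c*D N))^2*(1-(r N*r N)^(N+1))/(1 - r N*r N)" for N
  have l1: "S1 \<longlonglongrightarrow> \<rho>*T + 1" unfolding S1_def
    by (rule w_limit_core(1)[OF r th, of a m D r, unfolded c_def[symmetric]]) (simp_all add: a_def m_def D_def r_def c_def)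
  have l2: "S2 \<longlonglongrightarrow> 1/(4*\<theta>)" unfolding S2_def
    by (rule w_limit_core(2)[OF r th, of a m D r, unfolded c_def[symmetric]]) (simp_all add: a_def m_def D_def r_def c_def)
  have lim: "(\<lambda>N. \<theta> * S2 N / (S1 N)^2) \<longlonglongrightarrow> \<theta> * (1/(4*\<theta>)) / (\<rho>*T + 1)^2"
  proof -
    have "\<rho>*T > 0" using r by simp
    hence "\<rho>*T + 1 > 0" by linarith
    thus ?thesis by (intro tendsto_intros l1 l2) simp
  qed
  have lv: "\<theta> * (1/(4*\<theta>)) / (\<rho>*T + 1)^2 = 1 / (4 * (\<rho>*T + 1)^2)" using th by simp
  have ev: "eventually (\<lambda>N. \<theta> * S2 N / (S1 N)^2 = \<theta> * (w_vec \<rho> T \<theta> N \<bullet> w_vec \<rho> T \<theta> N)) sequentially"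
  proof (rule eventually_sequentiallyI[of 1])
    fix N :: nat assume N: "N \<ge> 1"
    have a: "0 < a N" "a N < 1" using a_bounds[OF r N] a_def by auto
    have c: "c > 1/2" using th c_def by simp
    have D: "D N > 0" unfolding D_def using a c by (simp add: add_pos_nonneg)
    have ra: "\<bar>r N\<bar> < 1"
    proof -
      have "\<bar>(c-1)/c\<bar> < 1" using c by (simp add: abs_less_iff field_simps)
      hence "\<bar>a N\<bar> * \<bar>(c-1)/c\<bar> < 1 * 1" using a
        by (intro mult_strict_mono') auto
      thus ?thesis unfolding r_def by (simp add: abs_mult)
    qed
    have r1: "r N \<noteq> 1" using ra by auto
    have r2: "r N * r N \<noteq> 1"
    proof
      assume h: "r N * r N = 1"
      have "\<bar>r N\<bar> * \<bar>r N\<bar> < 1 * 1" using ra by (intro mult_strict_mono') auto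
      moreover have "\<bar>r N\<bar> * \<bar>r N\<bar> = 1" using h by (simp only: abs_mult[symmetric] abs_one)
      ultimately show False by simp
    qed
    define g where "g j = (1-a N)/(c*(1-a N)+a N) + a N/(c*(c*(1-a N)+a N)) * (a N*(c-1)/c)^(N+1-1-j)" for j
    have om: "omega_vec \<rho> T \<theta> N = vec (N+1) g"
      unfolding g_def a_def c_def using omega_vec_eq[OF r th N] by simp
    have w: "w_vec \<rho> T \<theta> N \<bullet> w_vec \<rho> T \<theta> N = (\<Sum>j<N+1. (g j)^2) / (\<Sum>j<N+1. g j)^2"
      unfolding w_vec_def om by (rule dot_normalized)
    have gg: "g j = (1 - a N)/D N + (a N/(c*D N)) * r N^(N - j)" for j
      unfolding g_def D_def r_def by simp
    have s1: "(\<Sum>j<N+1. g j) = S1 N"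
      unfolding gg S1_def using sums_P_Q(1)[OF r1 r2, where N=N and P="(1 - a N)/D N" and Q="a N/(c*D N)"]
      by (simp add: m_def)
    have s2: "(\<Sum>j<N+1. (g j)^2) = S2 N"
      unfolding gg S2_def using sums_P_Q(2)[OF r1 r2, where N=N and P="(1 - a N)/D N" and Q="a N/(c*D N)"]
      by (simp add: m_def)
    show "\<theta> * S2 N / (S1 N)^2 = \<theta> * (w_vec \<rho> T \<theta> N \<bullet> w_vec \<rho> T \<theta> N)"
      unfolding w s1 s2 by simp
  qed
  show ?thesis using Lim_transform_eventually[OF lim ev] unfolding lv .
qed

lemma quad_root:
  fixes A b C \<sigma> z :: real
  assumes A: "A \<noteq> 0" and s: "\<sigma> * \<sigma> = b*b - 4*A*C" and z: "z = (-b + \<sigma>)/(2*A)"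
  shows "A*z^2 + b*z + C = 0"
proof -
  have "4*A*(A*z^2 + b*z + C) = (2*A*z)^2 + 2*b*(2*A*z) + 4*A*C" by (simp add: algebra_simps power2_eq_square)
  also have "2*A*z = -b + \<sigma>" using A z by simp
  also have "(-b + \<sigma>)^2 + 2*b*(-b + \<sigma>) + 4*A*C = \<sigma>*\<sigma> - b*b + 4*A*C" by (simp add: algebra_simps power2_eq_square)
  also have "\<dots> = 0" using s by simp
  finally show ?thesis using A by simp
qed

lemma phi_root:
  fixes a k z :: real
  assumes "z \<noteq> a" "a*z \<noteq> 1" and q: "a*(1-k)*z^2 + (k*(1+a^2) - 3*a^2)*z + a*(2-k) = 0"
  shows "phi a k z = 0"
proof -
  have d1: "z - a \<noteq> 0" and d2: "1 - a*z \<noteq> 0" using assms by auto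
  have "phi a k z * ((z - a) * (1 - a*z)) = a*(1-k)*z^2 + (k*(1+a^2) - 3*a^2)*z + a*(2-k)"
  proof -
    have t1: "2*a/(z-a) * ((z - a) * (1 - a*z)) = 2*a*(1-a*z)" using d1 by simp
    have t2: "a*z/(1-a*z) * ((z - a) * (1 - a*z)) = a*z*(z-a)" using d2 by simp
    have "phi a k z * ((z - a) * (1 - a*z)) = 2*a/(z-a) * ((z - a) * (1 - a*z)) + k*((z-a)*(1-a*z)) + a*z/(1-a*z) * ((z - a) * (1 - a*z))"
      unfolding phi_def by (simp only: distrib_right)
    also have "\<dots> = 2*a*(1-a*z) + k*((z-a)*(1-a*z)) + a*z*(z-a)" unfolding t1 t2 ..
    finally have "phi a k z * ((z - a) * (1 - a*z)) = 2*a*(1-a*z) + k*((z-a)*(1-a*z)) + a*z*(z-a)" .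
    thus ?thesis by (simp add: algebra_simps power2_eq_square)
  qed
  thus ?thesis using q d1 d2 by simp
qed

lemma delta_identity:
  fixes a k z :: real
  shows "a*(1-k)*z^2 + (k*(1+a^2) - 3*a^2)*z + a*(2-k)
     = (1-a)*(k*(1-a) + 3*a) + (z-1)*(k*(1-a)^2 + a*(2-3*a) + (z-1)*a*(1-k))"
  by (simp add: algebra_simps power2_eq_square)

lemma nu_vec_eq:
  fixes \<rho> T \<theta> :: real
  assumes th: "\<theta> > 0" and a0: "0 \<le> exp (- \<rho> * T / real N)" "exp (- \<rho> * T / real N) \<le> 1"
  defines "a \<equiv> exp (- \<rho> * T / real N)" and "k \<equiv> 3/2 + 2*\<theta>"
  fixes z1 z2 s \<beta> \<gamma> :: real
  assumes z: "z1 \<noteq> a" "z2 \<noteq> a" "a*z1 \<noteq> 1" "a*z2 \<noteq> 1" and a1: "a \<noteq> 1"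
    and ph: "phi a k z1 = 0" "phi a k z2 = 0"
    and s: "s * (3*a + k*(1-a)) = 1"
    and e1: "s + \<beta>/(z1-a) + \<gamma>/(z2-a) = 0"
    and e2: "s + \<beta>*(z1^(N+1)/(1-a*z1)) + \<gamma>*(z2^(N+1)/(1-a*z2)) = 0"
  shows "nu_vec \<rho> T \<theta> N = vec (N+1) (\<lambda>j. s*(1-a) + \<beta>*z1^j + \<gamma>*z2^j)"
proof -
  let ?x = "vec (N+1) (\<lambda>j. s*(1-a) + \<beta>*z1^j + \<gamma>*z2^j)"
  have A: "Mnu a k (N+1) \<in> carrier_mat (N+1) (N+1)" by (simp add: Mnu_def)
  have Ax: "Mnu a k (N+1) *\<^sub>v ?x = ones_vec (N+1)"
  proof (rule eq_vecI)
    fix i assume "i < dim_vec (ones_vec (N+1))"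
    hence i: "i < N+1" by (simp add: ones_vec_def)
    show "(Mnu a k (N+1) *\<^sub>v ?x) $ i = ones_vec (N+1) $ i"
      using nu_solves[OF z a1 ph i s e1 e2] i by (simp add: ones_vec_def)
  qed (simp add: ones_vec_def Mnu_def)
  have k: "k > 3/2" using th k_def by simp
  show ?thesis unfolding nu_vec_def Mnu_eq a_def[symmetric] k_def[symmetric]
    by (rule minv_apply[OF A _ Ax Mnu_det]) (use a0 k a_def in auto)
qed

lemma sums3:
  fixes \<alpha> \<beta> \<gamma> x y :: real and n :: nat
  assumes "x \<noteq> 1" "y \<noteq> 1" "x*x \<noteq> 1" "y*y \<noteq> 1" "x*y \<noteq> 1"
  defines "G \<equiv> \<lambda>q::real. (1 - q^n)/(1-q)"
  shows "(\<Sum>j<n. \<alpha> + \<beta>*x^j + \<gamma>*y^j) = real n * \<alpha> + \<beta> * G x + \<gamma> * G y"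
    and "(\<Sum>j<n. (\<alpha> + \<beta>*x^j + \<gamma>*y^j)^2) = real n * \<alpha> * \<alpha> + \<beta>^2 * G (x*x) + \<gamma>^2 * G (y*y)
          + 2*\<alpha>*\<beta>*G x + 2*\<alpha>*\<gamma>*G y + 2*\<beta>*\<gamma>*G (x*y)"
proof -
  have g: "(\<Sum>j<n. q^j) = G q" if "q \<noteq> 1" for q :: real
    using that unfolding G_def by (simp only: sum_gp_strict if_False)
  show "(\<Sum>j<n. \<alpha> + \<beta>*x^j + \<gamma>*y^j) = real n * \<alpha> + \<beta> * G x + \<gamma> * G y"
    using g[OF assms(1)] g[OF assms(2)] by (simp add: sum.distrib sum_distrib_left[symmetric])
  have "(\<Sum>j<n. (\<alpha> + \<beta>*x^j + \<gamma>*y^j)^2) = (\<Sum>j<n. \<alpha>*\<alpha> + \<beta>^2 * (x*x)^j + \<gamma>^2*(y*y)^j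
          + 2*\<alpha>*\<beta>*x^j + 2*\<alpha>*\<gamma>*y^j + 2*\<beta>*\<gamma>*(x*y)^j)"
    by (rule sum.cong) (simp_all add: power2_eq_square power_mult_distrib algebra_simps)
  also have "\<dots> = real n * \<alpha> * \<alpha> + \<beta>^2 * (\<Sum>j<n. (x*x)^j) + \<gamma>^2 * (\<Sum>j<n. (y*y)^j)
          + 2*\<alpha>*\<beta>*(\<Sum>j<n. x^j) + 2*\<alpha>*\<gamma>*(\<Sum>j<n. y^j) + 2*\<beta>*\<gamma>*(\<Sum>j<n. (x*y)^j)"
    by (simp add: sum.distrib sum_distrib_left)
  finally show "(\<Sum>j<n. (\<alpha> + \<beta>*x^j + \<gamma>*y^j)^2) = real n * \<alpha> * \<alpha> + \<beta>^2 * G (x*x) + \<gamma>^2 * G (y*y)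
          + 2*\<alpha>*\<beta>*G x + 2*\<alpha>*\<gamma>*G y + 2*\<beta>*\<gamma>*G (x*y)"
    using g assms by simp
qed

lemma nu_limit_core:
  fixes k c0 E :: real and a m del X Y z1 z2 p2 q2 r12 :: "nat \<Rightarrow> real"
  assumes k: "k > 3/2" and E: "E > 1"
  assumes la: "a \<longlonglongrightarrow> 1" and lm: "m \<longlonglongrightarrow> c0" and ldel: "del \<longlonglongrightarrow> 0" and lX: "X \<longlonglongrightarrow> 3"
    and lY: "Y \<longlonglongrightarrow> E" and lz1: "z1 \<longlonglongrightarrow> 1" and lz2: "z2 \<longlonglongrightarrow> (2-k)/(1-k)"
    and lp2: "p2 \<longlonglongrightarrow> 0" and lq2: "q2 \<longlonglongrightarrow> 0" and lr12: "r12 \<longlonglongrightarrow> 0"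
  defines "s \<equiv> \<lambda>N. 1/(3*a N + k*(1 - a N))"
  defines "eu1 \<equiv> \<lambda>N. 1/(X N + 1)" and "ew1 \<equiv> \<lambda>N. Y N/(1 - X N + del N)"
    and "u2 \<equiv> \<lambda>N. 1/(z2 N - a N)" and "w2 \<equiv> \<lambda>N. p2 N/(1 - a N * z2 N)"
  defines "edet \<equiv> \<lambda>N. eu1 N * w2 N - u2 N * ew1 N"
  defines "bt \<equiv> \<lambda>N. - s N * (w2 N - u2 N) / edet N" and "gm \<equiv> \<lambda>N. - s N * (eu1 N - ew1 N) / edet N"
  shows "(\<lambda>N. s N * m N + bt N * (1 - Y N)/(- X N) + gm N * (1 - p2 N)/(1 - z2 N))
           \<longlonglongrightarrow> c0/3 + 2*(E-1)/(9*E) + (1+2*E)/(6*E)"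
    and "(\<lambda>N. s N * m N * (s N * (1 - a N)) + (1 - a N) * (bt N)^2 * (1 - Y N * Y N)/(- X N * (2 + del N))
           + (gm N)^2 * (1 - q2 N)/(1 - z2 N * z2 N) + 2*(s N * (1 - a N))*bt N*(1 - Y N)/(- X N)
           + 2*(s N * (1 - a N))*gm N*(1 - p2 N)/(1 - z2 N) + 2*((1 - a N)*bt N)*gm N*(1 - r12 N)/(1 - z1 N * z2 N))
           \<longlonglongrightarrow> ((1+2*E)/(6*(k-1)*E))^2 * ((k-1)^2/(2*k - 3))"
    and "edet \<longlonglongrightarrow> (1-k)*E/2"
proof -
  define Z where "Z = (2-k)/(1-k)"
  have k1: "1 - k \<noteq> 0" "k - 1 \<noteq> 0" using k by auto
  have E0: "E \<noteq> 0" using E by simp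
  have Z1: "1 - Z = 1/(k-1)" unfolding Z_def using k1 by (simp add: field_simps)
  have Z2: "Z - 1 = 1/(1 - k)" using Z1 k1 by (simp add: field_simps)
  have Zk: "Z*(k-1) = k-2" unfolding Z_def using k1 by (simp add: field_simps)
  have dd: "(k-1)^2 \<noteq> 0" using k1 by simp
  have "(1 - Z*Z)*(k-1)^2 = (k-1)^2 - (Z*(k-1))^2" by (simp add: power2_eq_square algebra_simps)
  also have "\<dots> = 2*k-3" unfolding Zk by (simp add: power2_eq_square algebra_simps)
  finally have ZZ: "1 - Z*Z = (2*k-3)/(k-1)^2" using dd by (simp add: field_simps)
  have ZZ0: "1 - Z*Z \<noteq> 0" unfolding ZZ using k k1 by simp
  have lZ: "z2 \<longlonglongrightarrow> Z" using lz2 Z_def by simp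
  have ls: "s \<longlonglongrightarrow> 1/3" 
  proof -
    have "s \<longlonglongrightarrow> 1/(3*1 + k*(1-1))" unfolding s_def by (intro tendsto_intros la) simp
    thus ?thesis by simp
  qed
  have leu1: "eu1 \<longlonglongrightarrow> 1/4"
  proof -
    have "eu1 \<longlonglongrightarrow> 1/(3 + 1)" unfolding eu1_def by (intro tendsto_intros lX) simp
    thus ?thesis by simp
  qed
  have lew1: "ew1 \<longlonglongrightarrow> - E/2"
  proof -
    have "ew1 \<longlonglongrightarrow> E/(1 - 3 + 0)" unfolding ew1_def by (intro tendsto_intros lX lY ldel) simp
    thus ?thesis by simp
  qed
  have lu2: "u2 \<longlonglongrightarrow> 1 - k"
  proof -
    have "u2 \<longlonglongrightarrow> 1/(Z - 1)" unfolding u2_def by (intro tendsto_intros lZ la) (use Z2 k1 in simp)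
    thus ?thesis unfolding Z2 using k1 by (simp add: field_simps)
  qed
  have lw2: "w2 \<longlonglongrightarrow> 0"
  proof -
    have "1 - 1*Z \<noteq> 0" using Z1 k1 by simp
    hence "w2 \<longlonglongrightarrow> 0/(1 - 1*Z)" unfolding w2_def by (intro tendsto_intros lZ la lp2) simp
    thus ?thesis by simp
  qed
  have ledet: "edet \<longlonglongrightarrow> (1-k)*E/2"
  proof -
    have "edet \<longlonglongrightarrow> 1/4 * 0 - (1-k)*(-E/2)" unfolding edet_def by (intro tendsto_intros leu1 lew1 lu2 lw2)
    thus ?thesis by (simp add: field_simps)
  qed
  show "edet \<longlonglongrightarrow> (1-k)*E/2" by (rule ledet)
  have ed0: "(1-k)*E/2 \<noteq> 0" using k1 E0 by simp
  have lbt: "bt \<longlonglongrightarrow> 2/(3*E)"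
  proof -
    have "bt \<longlonglongrightarrow> - (1/3) * (0 - (1-k)) / ((1-k)*E/2)" unfolding bt_def
      by (intro tendsto_intros ls lw2 lu2 ledet ed0)
    moreover have "- (1/3) * (0 - (1-k)) / ((1-k)*E/2) = 2/(3*E)"
      using k1 E0 by (simp add: field_simps)
    ultimately show ?thesis by (simp only:)
  qed
  have lgm: "gm \<longlonglongrightarrow> (1+2*E)/(6*(k-1)*E)"
  proof -
    have "gm \<longlonglongrightarrow> - (1/3) * (1/4 - (-E/2)) / ((1-k)*E/2)" unfolding gm_def
      by (intro tendsto_intros ls leu1 lew1 ledet ed0)
    moreover have "- (1/3) * (1/4 - (-E/2)) / ((1-k)*E/2) = (1+2*E)/(6*(k-1)*E)"
      using k1 E0 by (simp add: field_simps)
    ultimately show ?thesis by (simp only:)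
  qed
  have X0: "- (3::real) \<noteq> 0" by simp
  show "(\<lambda>N. s N * m N + bt N * (1 - Y N)/(- X N) + gm N * (1 - p2 N)/(1 - z2 N))
           \<longlonglongrightarrow> c0/3 + 2*(E-1)/(9*E) + (1+2*E)/(6*E)"
  proof -
    have "(\<lambda>N. s N * m N + bt N * (1 - Y N)/(- X N) + gm N * (1 - p2 N)/(1 - z2 N))
       \<longlonglongrightarrow> 1/3 * c0 + 2/(3*E) * (1 - E)/(- 3) + (1+2*E)/(6*(k-1)*E) * (1 - 0)/(1 - Z)"
      using Z1 k1 by (intro tendsto_intros ls lm lbt lY lX lgm lp2 lZ) simp_all
    moreover have "1/3 * c0 + 2/(3*E) * (1 - E)/(- 3) + (1+2*E)/(6*(k-1)*E) * (1 - 0)/(1 - Z)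
        = c0/3 + 2*(E-1)/(9*E) + (1+2*E)/(6*E)"
      unfolding Z1 using k1 E0 by (simp add: field_simps)
    ultimately show ?thesis by (simp only:)
  qed
  show "(\<lambda>N. s N * m N * (s N * (1 - a N)) + (1 - a N) * (bt N)^2 * (1 - Y N * Y N)/(- X N * (2 + del N))
           + (gm N)^2 * (1 - q2 N)/(1 - z2 N * z2 N) + 2*(s N * (1 - a N))*bt N*(1 - Y N)/(- X N)
           + 2*(s N * (1 - a N))*gm N*(1 - p2 N)/(1 - z2 N) + 2*((1 - a N)*bt N)*gm N*(1 - r12 N)/(1 - z1 N * z2 N))
           \<longlonglongrightarrow> ((1+2*E)/(6*(k-1)*E))^2 * ((k-1)^2/(2*k - 3))"
  proof -
    have "(\<lambda>N. s N * m N * (s N * (1 - a N)) + (1 - a N) * (bt N)^2 * (1 - Y N * Y N)/(- X N * (2 + del N))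
           + (gm N)^2 * (1 - q2 N)/(1 - z2 N * z2 N) + 2*(s N * (1 - a N))*bt N*(1 - Y N)/(- X N)
           + 2*(s N * (1 - a N))*gm N*(1 - p2 N)/(1 - z2 N) + 2*((1 - a N)*bt N)*gm N*(1 - r12 N)/(1 - z1 N * z2 N))
      \<longlonglongrightarrow> 1/3 * c0 * (1/3 * (1 - 1)) + (1 - 1) * (2/(3*E))^2 * (1 - E * E)/(- 3 * (2 + 0))
           + ((1+2*E)/(6*(k-1)*E))^2 * (1 - 0)/(1 - Z * Z) + 2*(1/3 * (1 - 1))*(2/(3*E))*(1 - E)/(- 3)
           + 2*(1/3 * (1 - 1))*((1+2*E)/(6*(k-1)*E))*(1 - 0)/(1 - Z) + 2*((1 - 1)*(2/(3*E)))*((1+2*E)/(6*(k-1)*E))*(1 - 0)/(1 - 1 * Z)"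
      using Z1 k1 ZZ0 by (intro tendsto_intros ls lm lbt lY lX lgm lp2 lZ la ldel lq2 lr12 lz1) simp_all
    moreover have "1/3 * c0 * (1/3 * (1 - 1)) + (1 - 1) * (2/(3*E))^2 * (1 - E * E)/(- 3 * (2 + 0))
           + ((1+2*E)/(6*(k-1)*E))^2 * (1 - 0)/(1 - Z * Z) + 2*(1/3 * (1 - 1))*(2/(3*E))*(1 - E)/(- 3)
           + 2*(1/3 * (1 - 1))*((1+2*E)/(6*(k-1)*E))*(1 - 0)/(1 - Z) + 2*((1 - 1)*(2/(3*E)))*((1+2*E)/(6*(k-1)*E))*(1 - 0)/(1 - 1 * Z)
        = ((1+2*E)/(6*(k-1)*E))^2 * ((k-1)^2/(2*k - 3))"
      unfolding ZZ by simp
    ultimately show ?thesis by (simp only:)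
  qed
qed

lemma ratio_helper:
  fixes U W E :: real
  assumes "E \<noteq> 0" "W \<noteq> 0"
  shows "U^2/(144*E^2) / (W/(18*E))^2 = 9 * U^2 / (4 * W^2)"
  using assms by (simp add: power_divide field_simps power2_eq_square)

lemma coef_helper:
  fixes d e1 f1 u2 w2 s :: real
  assumes d: "d \<noteq> 0" and dd: "d = e1*w2 - u2*f1"
  shows "s + (- s*(w2-u2)/d)*e1 + (- s*(e1-f1)/d)*u2 = 0"
    and "s + (- s*(w2-u2)/d)*f1 + (- s*(e1-f1)/d)*w2 = 0"
proof -
  have "s + (- s*(w2-u2)/d)*e1 + (- s*(e1-f1)/d)*u2 = s*(d - (e1*w2 - u2*f1))/d"
    using d by (simp add: field_simps)
  thus "s + (- s*(w2-u2)/d)*e1 + (- s*(e1-f1)/d)*u2 = 0" using dd by simp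
  have "s + (- s*(w2-u2)/d)*f1 + (- s*(e1-f1)/d)*w2 = s*(d - (e1*w2 - u2*f1))/d"
    using d by (simp add: field_simps)
  thus "s + (- s*(w2-u2)/d)*f1 + (- s*(e1-f1)/d)*w2 = 0" using dd by simp
qed

lemma t4_helper:
  fixes e b x y w :: real
  assumes "e \<noteq> 0" "x \<noteq> 0" "w \<noteq> 0"
  shows "(e*b)^2 * ((1 - y)/(- (x*e) * w)) = e * b^2 * (1 - y)/(- x * w)"
  using assms by (simp add: field_simps power2_eq_square)

lemma v_limit:
  fixes \<rho> T \<theta> :: real
  assumes r: "\<rho> > 0" "T > 0" and th: "\<theta> > 0"
  shows "(\<lambda>N. \<theta> * (v_vec \<rho> T \<theta> N \<bullet> v_vec \<rho> T \<theta> N)) \<longlonglongrightarrow>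
           9 * (1 + 2 * exp (3*\<rho>*T))^2 / (4 * (1 - 2 * exp (3*\<rho>*T) * (5 + 3*\<rho>*T))^2)"
proof -
  define k where "k = 3/2 + 2*\<theta>"
  have k: "k > 3/2" using th k_def by simp
  have k1: "1 - k \<noteq> 0" "k - 1 \<noteq> 0" using k by auto
  define c0 where "c0 = \<rho>*T"
  have c0: "c0 > 0" using r c0_def by simp
  define E where "E = exp (3*c0)"
  have E: "E > 1" using c0 E_def by simp
  define a where "a N = exp (- \<rho> * T / real N)" for N
  define bq where "bq N = k*(1+(a N)^2) - 3*(a N)^2" for N
  define Aq where "Aq N = a N*(1-k)" for N
  define Cq where "Cq N = a N*(2-k)" for N
  define Dq where "Dq N = (bq N)^2 - 4*Aq N*Cq N" for N
  define z1 where "z1 N = (- bq N - sqrt (Dq N))/(2*Aq N)" for N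
  define z2 where "z2 N = (- bq N + sqrt (Dq N))/(2*Aq N)" for N
  define m where "m N = real (N+1) * (1 - a N)" for N
  define del where "del N = z1 N - 1" for N
  define X where "X N = del N / (1 - a N)" for N
  define Y where "Y N = z1 N ^ (N+1)" for N
  define p2 where "p2 N = z2 N ^ (N+1)" for N
  define q2 where "q2 N = (z2 N * z2 N) ^ (N+1)" for N
  define r12 where "r12 N = (z1 N * z2 N) ^ (N+1)" for N
  define Z where "Z = (2-k)/(1-k)"
  have la: "a \<longlonglongrightarrow> 1" unfolding a_def using lim_a[of "\<rho>*T"] by simp
  have lm: "m \<longlonglongrightarrow> c0" unfolding m_def a_def c0_def using lim_Neps[of "\<rho>*T"] r by simp
  have apos: "a N > 0" for N unfolding a_def by simp
  have lDq: "Dq \<longlonglongrightarrow> 1"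
  proof -
    have "Dq \<longlonglongrightarrow> (k*(1+1^2) - 3*1^2)^2 - 4*(1*(1-k))*(1*(2-k))"
      unfolding Dq_def bq_def Aq_def Cq_def by (intro tendsto_intros la)
    moreover have "(k*(1+1^2) - 3*1^2)^2 - 4*(1*(1-k))*(1*(2-k)) = (1::real)"
      by (simp add: power2_eq_square algebra_simps)
    ultimately show ?thesis by (simp only:)
  qed
  have lz1: "z1 \<longlonglongrightarrow> 1"
  proof -
    have "z1 \<longlonglongrightarrow> (- (k*(1+1^2) - 3*1^2) - sqrt 1)/(2*(1*(1-k)))"
      unfolding z1_def bq_def Aq_def using k1 by (intro tendsto_intros la lDq) simp_all
    moreover have "(- (k*(1+1^2) - 3*1^2) - sqrt 1)/(2*(1*(1-k))) = (1::real)"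
      using k1 by (simp add: field_simps)
    ultimately show ?thesis by (simp only:)
  qed
  have lz2: "z2 \<longlonglongrightarrow> Z"
  proof -
    have "z2 \<longlonglongrightarrow> (- (k*(1+1^2) - 3*1^2) + sqrt 1)/(2*(1*(1-k)))"
      unfolding z2_def bq_def Aq_def using k1 by (intro tendsto_intros la lDq) simp_all
    moreover have "(- (k*(1+1^2) - 3*1^2) + sqrt 1)/(2*(1*(1-k))) = Z"
      unfolding Z_def using k1 by (simp add: field_simps)
    ultimately show ?thesis by (simp only:)
  qed
  have evD: "eventually (\<lambda>N. Dq N > 0) sequentially" using lDq by (rule order_tendstoD) simp
  have Aq0: "Aq N \<noteq> 0" for N unfolding Aq_def using apos[of N] k1 by simp
  have root1: "Aq N * (z1 N)^2 + bq N * z1 N + Cq N = 0" if "Dq N \<ge> 0" for N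
    by (rule quad_root[OF Aq0, of "- sqrt (Dq N)"]) (use that in \<open>simp_all add: z1_def Dq_def power2_eq_square\<close>)
  have root2: "Aq N * (z2 N)^2 + bq N * z2 N + Cq N = 0" if "Dq N \<ge> 0" for N
    by (rule quad_root[OF Aq0, of "sqrt (Dq N)"]) (use that in \<open>simp_all add: z2_def Dq_def power2_eq_square\<close>)
  have ldel: "del \<longlonglongrightarrow> 0" unfolding del_def using tendsto_diff[OF lz1 tendsto_const[of 1]] by simp
  have evN: "eventually (\<lambda>N. N \<ge> 1) sequentially" by (rule eventually_sequentiallyI[of 1]) simp
  have alt: "a N < 1" if "N \<ge> 1" for N using a_bounds[OF r that] a_def by simp
  define Bq where "Bq N = k*(1-a N)^2 + a N*(2-3*a N) + del N*a N*(1-k)" for N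
  have lB: "Bq \<longlonglongrightarrow> -1"
  proof -
    have "Bq \<longlonglongrightarrow> k*(1-1)^2 + 1*(2-3*1) + 0*1*(1-k)" unfolding Bq_def by (intro tendsto_intros la ldel)
    thus ?thesis by simp
  qed
  have evB: "eventually (\<lambda>N. Bq N < 0) sequentially" using lB by (rule order_tendstoD) simp
  have Xeq: "X N = - (k*(1-a N) + 3*a N)/Bq N" if "N \<ge> 1" "Dq N > 0" "Bq N < 0" for N
  proof -
    have "a N*(1-k)*(z1 N)^2 + (k*(1+(a N)^2) - 3*(a N)^2)*z1 N + a N*(2-k) = 0"
      using root1[of N] that(2) unfolding Aq_def bq_def Cq_def by simp
    hence "(1-a N)*(k*(1-a N) + 3*a N) + del N * Bq N = 0"
      unfolding delta_identity Bq_def del_def by (simp add: algebra_simps)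
    hence "del N = (1-a N) * (- (k*(1-a N) + 3*a N) / Bq N)" using that(3) by (simp add: field_simps)
    moreover have "1 - a N \<noteq> 0" using alt[OF that(1)] by simp
    ultimately show ?thesis unfolding X_def by (metis nonzero_mult_div_cancel_left)
  qed
  have lX: "X \<longlonglongrightarrow> 3"
  proof -
    have "(\<lambda>N. - (k*(1-a N) + 3*a N)/Bq N) \<longlonglongrightarrow> - (k*(1-1) + 3*1)/(-1)"
      by (intro tendsto_intros la lB) simp
    hence l: "(\<lambda>N. - (k*(1-a N) + 3*a N)/Bq N) \<longlonglongrightarrow> 3" by simp
    have "eventually (\<lambda>N. - (k*(1-a N) + 3*a N)/Bq N = X N) sequentially"
      using evN evD evB by eventually_elim (simp add: Xeq)
    thus ?thesis by (rule Lim_transform_eventually[OF l])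
  qed
  have evX: "eventually (\<lambda>N. X N > 0) sequentially" using lX by (rule order_tendstoD) simp
  have delpos: "del N > 0" if "N \<ge> 1" "X N > 0" for N
  proof -
    have "del N = X N * (1 - a N)" unfolding X_def using alt[OF that(1)] by simp
    thus ?thesis using that alt[OF that(1)] by simp
  qed
  have evdel: "eventually (\<lambda>N. del N > 0) sequentially" using evN evX by eventually_elim (rule delpos)
  have lln: "(\<lambda>N. ln (1 + del N) / del N) \<longlonglongrightarrow> 1"
    by (rule tendsto_compose_eventually[OF lim_ln ldel]) (use evdel in \<open>auto elim: eventually_mono\<close>)
  have lY: "Y \<longlonglongrightarrow> E"
  proof -
    have "(\<lambda>N. exp (m N * X N * (ln (1 + del N) / del N))) \<longlonglongrightarrow> exp (c0 * 3 * 1)"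
      by (intro tendsto_intros lm lX lln)
    hence l: "(\<lambda>N. exp (m N * X N * (ln (1 + del N) / del N))) \<longlonglongrightarrow> E" unfolding E_def by (simp add: mult.commute)
    have "eventually (\<lambda>N. exp (m N * X N * (ln (1 + del N) / del N)) = Y N) sequentially"
      using evN evdel
    proof eventually_elim
      case (elim N)
      have a1: "1 - a N \<noteq> 0" using alt[OF elim(1)] by simp
      have z1p: "z1 N = 1 + del N" unfolding del_def by simp
      have "m N * X N * (ln (1 + del N) / del N) = real (N+1) * ln (z1 N)"
        unfolding m_def X_def z1p using a1 elim(2) by (simp add: field_simps)
      moreover have "exp (real (N+1) * ln (z1 N)) = z1 N ^ (N+1)"
        using exp_of_nat_mult[of "N+1" "ln (z1 N)"] elim(2) z1p by simp
      ultimately show ?case unfolding Y_def by simp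
    qed
    thus ?thesis by (rule Lim_transform_eventually[OF l])
  qed
  have Zk: "Z = (k-2)/(k-1)" unfolding Z_def using k1 by (simp add: field_simps)
  have absZ: "\<bar>Z\<bar> < 1" unfolding Zk using k by (simp add: abs_less_iff field_simps)
  have "\<bar>Z\<bar>*\<bar>Z\<bar> < 1*1" by (rule mult_strict_mono') (use absZ in auto)
  hence absZZ: "\<bar>Z*Z\<bar> < 1" by (simp add: abs_mult)
  have lp2: "p2 \<longlonglongrightarrow> 0" unfolding p2_def by (rule lim_pow0[OF lz2 absZ])
  have lq2: "q2 \<longlonglongrightarrow> 0" unfolding q2_def by (rule lim_pow0[OF _ absZZ]) (intro tendsto_intros lz2)
  have lz12: "(\<lambda>N. z1 N * z2 N) \<longlonglongrightarrow> 1*Z" by (intro tendsto_intros lz1 lz2)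
  have lr12: "r12 \<longlonglongrightarrow> 0" unfolding r12_def by (rule lim_pow0[OF lz12]) (use absZ in simp)
  define s where "s = (\<lambda>N. 1/(3*a N + k*(1 - a N)))"
  define eu1 where "eu1 = (\<lambda>N. 1/(X N + 1))"
  define ew1 where "ew1 = (\<lambda>N. Y N/(1 - X N + del N))"
  define u2 where "u2 = (\<lambda>N. 1/(z2 N - a N))"
  define w2 where "w2 = (\<lambda>N. p2 N/(1 - a N * z2 N))"
  define edet where "edet = (\<lambda>N. eu1 N * w2 N - u2 N * ew1 N)"
  define bt where "bt = (\<lambda>N. - s N * (w2 N - u2 N) / edet N)"
  define gm where "gm = (\<lambda>N. - s N * (eu1 N - ew1 N) / edet N)"
  define S1 where "S1 = (\<lambda>N. s N * m N + bt N * (1 - Y N)/(- X N) + gm N * (1 - p2 N)/(1 - z2 N))"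
  define S2 where "S2 = (\<lambda>N. s N * m N * (s N * (1 - a N)) + (1 - a N) * (bt N)^2 * (1 - Y N * Y N)/(- X N * (2 + del N))
           + (gm N)^2 * (1 - q2 N)/(1 - z2 N * z2 N) + 2*(s N * (1 - a N))*bt N*(1 - Y N)/(- X N)
           + 2*(s N * (1 - a N))*gm N*(1 - p2 N)/(1 - z2 N) + 2*((1 - a N)*bt N)*gm N*(1 - r12 N)/(1 - z1 N * z2 N))"
  have lz2': "z2 \<longlonglongrightarrow> (2-k)/(1-k)" using lz2 Z_def by simp
  note L = nu_limit_core[OF k E la lm ldel lX lY lz1 lz2' lp2 lq2 lr12]
  have lS1: "S1 \<longlonglongrightarrow> c0/3 + 2*(E-1)/(9*E) + (1+2*E)/(6*E)"
    unfolding S1_def bt_def gm_def edet_def s_def eu1_def ew1_def u2_def w2_def by (rule L(1))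
  have lS2: "S2 \<longlonglongrightarrow> ((1+2*E)/(6*(k-1)*E))^2 * ((k-1)^2/(2*k - 3))"
    unfolding S2_def bt_def gm_def edet_def s_def eu1_def ew1_def u2_def w2_def by (rule L(2))
  have ledet: "edet \<longlonglongrightarrow> (1-k)*E/2"
    unfolding edet_def s_def eu1_def ew1_def u2_def w2_def by (rule L(3))
  define L1 where "L1 = c0/3 + 2*(E-1)/(9*E) + (1+2*E)/(6*E)"
  define L2 where "L2 = ((1+2*E)/(6*(k-1)*E))^2 * ((k-1)^2/(2*k - 3))"
  have E0: "E \<noteq> 0" using E by simp
  have P0: "6*c0*E + 10*E - 1 > 0" using E c0 by (smt (verit) mult_pos_pos)
  have hL1: "L1 = (6*c0*E + 10*E - 1)/(18*E)" unfolding L1_def using E0 by (simp add: field_simps)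
  have L10: "L1 \<noteq> 0" unfolding hL1 using P0 E0 by simp
  have hL2: "\<theta> * L2 = (1+2*E)^2/(144*E^2)"
  proof -
    have kk: "2*k - 3 = 4*\<theta>" unfolding k_def by simp
    define Q where "Q = (1+2*E)/(6*(k-1)*E)"
    have Qk: "Q*(k-1) = (1+2*E)/(6*E)" unfolding Q_def using k1 E0 by (simp add: field_simps)
    have "\<theta> * L2 = \<theta> * (Q^2 * ((k-1)^2/(4*\<theta>)))" unfolding L2_def kk Q_def ..
    also have "\<dots> = (Q^2*(k-1)^2)/4" using th by (simp add: field_simps)
    also have "\<dots> = (Q*(k-1))^2/4" by (simp only: power_mult_distrib)
    also have "\<dots> = (1+2*E)^2/(144*E^2)" unfolding Qk using E0 by (simp add: power_divide field_simps)
    finally show ?thesis .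
  qed
  have Eeq: "exp (3*\<rho>*T) = E" unfolding E_def c0_def by (simp add: mult.assoc)
  have val: "\<theta> * L2 / L1^2 = 9 * (1 + 2 * exp (3*\<rho>*T))^2 / (4 * (1 - 2 * exp (3*\<rho>*T) * (5 + 3*\<rho>*T))^2)"
  proof -
    have e3: "(1 - 2 * E * (5 + 3*\<rho>*T))^2 = (6*c0*E + 10*E - 1)^2"
      unfolding c0_def by (simp add: power2_eq_square algebra_simps)
    have "\<theta> * L2 / L1^2 = (1+2*E)^2/(144*E^2) / ((6*c0*E + 10*E - 1)/(18*E))^2"
      unfolding hL2[symmetric] hL1 by simp
    also have "\<dots> = 9 * (1 + 2*E)^2 / (4 * (6*c0*E + 10*E - 1)^2)"
      using E0 P0 by (intro ratio_helper) simp_all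
    finally show ?thesis unfolding Eeq e3 .
  qed
  have lim: "(\<lambda>N. \<theta> * S2 N / (S1 N)^2) \<longlonglongrightarrow> \<theta> * L2 / L1^2"
    using L10 by (intro tendsto_intros lS1[folded L1_def] lS2[folded L2_def]) simp
  have Z1: "Z \<noteq> 1" using absZ by auto
  have ZZ1: "Z*Z \<noteq> 1" using absZZ by auto
  have ev_ed: "eventually (\<lambda>N. edet N \<noteq> 0) sequentially"
    by (rule tendsto_imp_eventually_ne[OF ledet]) (use k1 E0 in simp)
  have ev_w: "eventually (\<lambda>N. 1 - X N + del N < 0) sequentially"
  proof -
    have "(\<lambda>N. 1 - X N + del N) \<longlonglongrightarrow> 1 - 3 + 0" by (intro tendsto_intros lX ldel)
    thus ?thesis by (rule order_tendstoD) simp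
  qed
  have ev_z2a: "eventually (\<lambda>N. z2 N - a N \<noteq> 0) sequentially"
  proof -
    have "(\<lambda>N. z2 N - a N) \<longlonglongrightarrow> Z - 1" by (intro tendsto_intros lz2 la)
    thus ?thesis by (rule tendsto_imp_eventually_ne) (use Z1 in simp)
  qed
  have ev_az2: "eventually (\<lambda>N. 1 - a N * z2 N \<noteq> 0) sequentially"
  proof -
    have "(\<lambda>N. 1 - a N * z2 N) \<longlonglongrightarrow> 1 - 1 * Z" by (intro tendsto_intros lz2 la)
    thus ?thesis by (rule tendsto_imp_eventually_ne) (use Z1 in simp)
  qed
  have ev_z2: "eventually (\<lambda>N. 1 - z2 N \<noteq> 0) sequentially"
  proof -
    have "(\<lambda>N. 1 - z2 N) \<longlonglongrightarrow> 1 - Z" by (intro tendsto_intros lz2)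
    thus ?thesis by (rule tendsto_imp_eventually_ne) (use Z1 in simp)
  qed
  have ev_zz: "eventually (\<lambda>N. 1 - z2 N * z2 N \<noteq> 0) sequentially"
  proof -
    have "(\<lambda>N. 1 - z2 N * z2 N) \<longlonglongrightarrow> 1 - Z * Z" by (intro tendsto_intros lz2)
    thus ?thesis by (rule tendsto_imp_eventually_ne) (use ZZ1 in simp)
  qed
  have ev_z12: "eventually (\<lambda>N. 1 - z1 N * z2 N \<noteq> 0) sequentially"
  proof -
    have "(\<lambda>N. 1 - z1 N * z2 N) \<longlonglongrightarrow> 1 - 1 * Z" by (intro tendsto_intros lz2 lz1)
    thus ?thesis by (rule tendsto_imp_eventually_ne) (use Z1 in simp)
  qed
  have ev: "eventually (\<lambda>N. \<theta> * S2 N / (S1 N)^2 = \<theta> * (v_vec \<rho> T \<theta> N \<bullet> v_vec \<rho> T \<theta> N)) sequentially"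
    using evN evD evX evdel ev_ed ev_w ev_z2a ev_az2 ev_z2 ev_zz ev_z12
  proof eventually_elim
    case (elim N)
    define eps where "eps = 1 - a N"
    have eps: "eps > 0" unfolding eps_def using alt[OF elim(1)] by simp
    have hdel: "del N = X N * eps" unfolding X_def eps_def using eps eps_def by simp
    have hz1: "z1 N = 1 + del N" unfolding del_def by simp
    have z1a: "z1 N - a N = eps * (X N + 1)" unfolding hz1 hdel eps_def by (simp add: algebra_simps)
    have az1: "1 - a N * z1 N = eps * (1 - X N + del N)"
      unfolding hz1 eps_def using hdel eps_def by (simp add: algebra_simps)
    have Xp1: "X N + 1 \<noteq> 0" using elim(3) by simp
    have "eps * (X N + 1) > 0" using eps elim(3) by simp
    hence c_z1a: "z1 N \<noteq> a N" using z1a by auto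
    have c_az1: "a N * z1 N \<noteq> 1" using az1 eps elim(6) by auto
    have c_z2a: "z2 N \<noteq> a N" using elim(7) by simp
    have c_az2: "a N * z2 N \<noteq> 1" using elim(8) by simp
    have c_a1: "a N \<noteq> 1" using eps eps_def by simp
    have Dq0: "Dq N \<ge> 0" using elim(2) by simp
    have ph1: "phi (a N) k (z1 N) = 0"
      by (rule phi_root[OF c_z1a c_az1]) (use root1[OF Dq0] in \<open>simp add: Aq_def bq_def Cq_def\<close>)
    have ph2: "phi (a N) k (z2 N) = 0"
      by (rule phi_root[OF c_z2a c_az2]) (use root2[OF Dq0] in \<open>simp add: Aq_def bq_def Cq_def\<close>)
    have den: "3 * a N + k * (1 - a N) > 0" using apos[of N] eps eps_def k
      by (simp add: add_pos_pos)
    have cs: "s N * (3 * a N + k * (1 - a N)) = 1" unfolding s_def using den by simp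
    note ce = coef_helper[OF elim(5) edet_def[THEN fun_cong, of N, simplified], of "s N"]
    have ce1: "s N + bt N * eu1 N + gm N * u2 N = 0" using ce(1) unfolding bt_def gm_def by simp
    have ce2: "s N + bt N * ew1 N + gm N * w2 N = 0" using ce(2) unfolding bt_def gm_def by simp
    have q1: "(eps * bt N) / (z1 N - a N) = bt N * eu1 N" unfolding z1a eu1_def using eps Xp1 by simp
    have q2: "gm N / (z2 N - a N) = gm N * u2 N" unfolding u2_def by simp
    have e1: "s N + (eps * bt N)/(z1 N - a N) + gm N/(z2 N - a N) = 0" unfolding q1 q2 by (rule ce1)
    have q3: "(eps * bt N) * (z1 N^(N+1)/(1 - a N * z1 N)) = bt N * ew1 N"
      unfolding az1 ew1_def Y_def using eps by simp
    have q4: "gm N * (z2 N^(N+1)/(1 - a N * z2 N)) = gm N * w2 N" unfolding w2_def p2_def by simp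
    have e2: "s N + (eps * bt N) * (z1 N^(N+1)/(1 - a N * z1 N)) + gm N * (z2 N^(N+1)/(1 - a N * z2 N)) = 0"
      unfolding q3 q4 by (rule ce2)
    have a0: "0 \<le> exp (- \<rho> * T / real N)" "exp (- \<rho> * T / real N) \<le> 1"
      using apos[of N] alt[OF elim(1)] unfolding a_def by auto
    have nu: "nu_vec \<rho> T \<theta> N = vec (N+1) (\<lambda>j. s N * (1 - a N) + (eps * bt N) * z1 N ^ j + gm N * z2 N ^ j)"
      using nu_vec_eq[OF th a0, folded a_def k_def, OF c_z1a c_z2a c_az1 c_az2 c_a1 ph1 ph2 cs e1 e2] .
    define \<alpha> where "\<alpha> = s N * (1 - a N)"
    define \<beta> where "\<beta> = eps * bt N"
    have vv: "v_vec \<rho> T \<theta> N \<bullet> v_vec \<rho> T \<theta> N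
       = (\<Sum>j<N+1. (\<alpha> + \<beta> * z1 N ^ j + gm N * z2 N ^ j)^2) / (\<Sum>j<N+1. \<alpha> + \<beta> * z1 N ^ j + gm N * z2 N ^ j)^2"
      unfolding v_vec_def nu \<alpha>_def \<beta>_def by (rule dot_normalized)
    have dp: "del N > 0" using elim(4) .
    have c1: "z1 N \<noteq> 1" using dp hz1 by simp
    have z1g: "z1 N > 1" using dp hz1 by simp
    have c3: "z1 N * z1 N \<noteq> 1" using z1g by (smt (verit) mult_less_cancel_left1)
    have c2: "z2 N \<noteq> 1" using elim(9) by simp
    have c4: "z2 N * z2 N \<noteq> 1" using elim(10) by simp
    have c5: "z1 N * z2 N \<noteq> 1" using elim(11) by simp
    note sm = sums3[OF c1 c2 c3 c4 c5, where \<alpha>=\<alpha> and \<beta>=\<beta> and \<gamma>="gm N" and n="N+1"]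
    have X0: "X N \<noteq> 0" using elim(3) by simp
    have e0: "eps \<noteq> 0" using eps by simp
    have om1: "1 - z1 N = - (X N * eps)" unfolding hz1 hdel by simp
    have om11: "1 - z1 N * z1 N = - (X N * eps) * (2 + del N)" unfolding hz1 hdel by (simp add: algebra_simps)
    have t1: "real (N+1) * \<alpha> = s N * m N" unfolding \<alpha>_def m_def by simp
    have t2: "\<beta> * ((1 - z1 N^(N+1))/(1 - z1 N)) = bt N * (1 - Y N)/(- X N)"
      unfolding \<beta>_def om1 Y_def using e0 X0 by (simp add: field_simps)
    have S1eq: "(\<Sum>j<N+1. \<alpha> + \<beta> * z1 N ^ j + gm N * z2 N ^ j) = S1 N"
      unfolding sm(1) S1_def using t1 t2 by (simp add: p2_def)
    have t3: "real (N+1) * \<alpha> * \<alpha> = s N * m N * (s N * (1 - a N))" unfolding \<alpha>_def m_def by simp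
    have t4: "\<beta>^2 * ((1 - (z1 N * z1 N)^(N+1))/(1 - z1 N * z1 N)) = (1 - a N) * (bt N)^2 * (1 - Y N * Y N)/(- X N * (2 + del N))"
    proof -
      have "(z1 N * z1 N)^(N+1) = Y N * Y N" unfolding Y_def by (simp add: power_mult_distrib)
      moreover have "2 + del N \<noteq> 0" using dp by simp
      ultimately show ?thesis unfolding \<beta>_def om11 eps_def[symmetric] using t4_helper[OF e0 X0] by simp
    qed
    have t5: "2 * \<alpha> * \<beta> * ((1 - z1 N^(N+1))/(1 - z1 N)) = 2*(s N * (1 - a N))*bt N*(1 - Y N)/(- X N)"
    proof -
      have "2 * \<alpha> * \<beta> * ((1 - z1 N^(N+1))/(1 - z1 N)) = 2 * \<alpha> * (\<beta> * ((1 - z1 N^(N+1))/(1 - z1 N)))"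
        by (simp only: mult.assoc)
      also have "\<dots> = 2 * \<alpha> * (bt N * (1 - Y N)/(- X N))" unfolding t2 ..
      also have "\<dots> = 2 * \<alpha> * bt N * (1 - Y N)/(- X N)" by (simp only: times_divide_eq_right mult.assoc)
      finally show ?thesis unfolding \<alpha>_def .
    qed
    have S2eq: "(\<Sum>j<N+1. (\<alpha> + \<beta> * z1 N ^ j + gm N * z2 N ^ j)^2) = S2 N"
      unfolding sm(2) S2_def using t3 t4 t5 by (simp add: p2_def q2_def r12_def \<alpha>_def \<beta>_def eps_def)
    show ?case unfolding vv S1eq S2eq by simp
  qed
  have "(\<lambda>N. \<theta> * (v_vec \<rho> T \<theta> N \<bullet> v_vec \<rho> T \<theta> N)) \<longlonglongrightarrow> \<theta> * L2 / L1^2"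
    by (rule Lim_transform_eventually[OF lim ev])
  thus ?thesis unfolding val .
qed

theorem lemmaA7:
  fixes \<rho> T \<theta> :: real
  assumes "\<rho> > 0" and "T > 0" and "\<theta> > 0"
  shows "(\<lambda>N. \<theta> * (v_vec \<rho> T \<theta> N \<bullet> v_vec \<rho> T \<theta> N)) \<longlonglongrightarrow>
           9 * (1 + 2 * exp (3*\<rho>*T))^2 / (4 * (1 - 2 * exp (3*\<rho>*T) * (5 + 3*\<rho>*T))^2)
    \<and> (\<lambda>N. \<theta> * (w_vec \<rho> T \<theta> N \<bullet> w_vec \<rho> T \<theta> N)) \<longlonglongrightarrow> 1 / (4 * (\<rho>*T + 1)^2)"
  using v_limit[OF assms] w_limit[OF assms] by blast

end
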